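(* Let $\mathfrak{S}=(S,\to,;)$ be an implication semigroup containing an element $0$ such that for all $a\in S$ we have $0\le a$ and $0;a=a;0=0$. If $\mathfrak{S}$ is representable via some representation $h$, then there exists a representation $h'$ of $\mathfrak{S}$ with $h'(0)=\emptyset$. Moreover, if $h$ is defined over a finite base, so is $h'$.
   Context: An implication algebra is a pair $(A,\to)$ with $\to$ a binary operation satisfying, for all $a,b,c$: $(a\to b)\to a=a$; $(a\to b)\to b=(b\to a)\to a$; $a\to(b\to c)=b\to(a\to c)$. In it, $1:=a\to a$ does not depend on $a$, and $a\le b$ iff $a\to b=1$ is a partial order. An implication semigroup is $(S,\to,;)$ with $(S,\to)$ an implication algebra, $(S,;)$ a semigroup, and for all $a,b,c$: $((a\to b)\to b);c=(a;c\to b;c)\to b;c$ and $c;((a\to b)\to b)=(c;a\to c;b)\to c;b$. For a transitive relation $\top\subseteq X\times X$, $\mathfrak{S}(\top)=(\wp(\top),\to,;)$ with $a\to b=(\top\setminus a)\cup b$ and $;$ relational composition. A representation of $\mathfrak{S}$ is an embedding (injective map preserving $\to$ and $;$) $h:\mathfrak{S}\to\mathfrak{S}(\top)$ for some transitive $\top\subseteq X\times X$; $X$ is its base. *)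

theory Defs
  imports Main
begin

definition implication_algebra :: "('a \<Rightarrow> 'a \<Rightarrow> 'a) \<Rightarrow> bool" where
  "implication_algebra imp \<longleftrightarrow>
     (\<forall>a b. imp (imp a b) a = a) \<and>
     (\<forall>a b. imp (imp a b) b = imp (imp b a) a) \<and>
     (\<forall>a b c. imp a (imp b c) = imp b (imp a c))"

definition ia_le :: "('a \<Rightarrow> 'a \<Rightarrow> 'a) \<Rightarrow> 'a \<Rightarrow> 'a \<Rightarrow> bool" where
  "ia_le imp a b \<longleftrightarrow> imp a b = imp a a"

definition implication_semigroup :: "('a \<Rightarrow> 'a \<Rightarrow> 'a) \<Rightarrow> ('a \<Rightarrow> 'a \<Rightarrow> 'a) \<Rightarrow> bool" where
  "implication_semigroup imp sc \<longleftrightarrow>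
     implication_algebra imp \<and>
     (\<forall>a b c. sc (sc a b) c = sc a (sc b c)) \<and>
     (\<forall>a b c. sc (imp (imp a b) b) c = imp (imp (sc a c) (sc b c)) (sc b c)) \<and>
     (\<forall>a b c. sc c (imp (imp a b) b) = imp (imp (sc c a) (sc c b)) (sc c b))"

text \<open>h is a representation of (UNIV, imp, sc) into the implication semigroup
  of all subsets of the transitive relation T on base X.\<close>
definition is_representation ::
  "('a \<Rightarrow> 'a \<Rightarrow> 'a) \<Rightarrow> ('a \<Rightarrow> 'a \<Rightarrow> 'a) \<Rightarrow> ('a \<Rightarrow> ('b \<times> 'b) set) \<Rightarrow> ('b \<times> 'b) set \<Rightarrow> 'b set \<Rightarrow> bool" where
  "is_representation imp sc h T X \<longleftrightarrow>
     T \<subseteq> X \<times> X \<and> trans T \<and> inj h \<and>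
     (\<forall>a. h a \<subseteq> T) \<and>
     (\<forall>a b. h (imp a b) = (T - h a) \<union> h b) \<and>
     (\<forall>a b. h (sc a b) = h a O h b)"

end

theory Submission
  imports Defs
begin

theorem lemma5:
  fixes imp sc :: "'a \<Rightarrow> 'a \<Rightarrow> 'a" and z :: 'a
    and h :: "'a \<Rightarrow> ('b \<times> 'b) set" and T :: "('b \<times> 'b) set" and X :: "'b set"
  assumes "implication_semigroup imp sc"
    and "\<forall>a. ia_le imp z a"
    and "\<forall>a. sc z a = z \<and> sc a z = z"
    and "is_representation imp sc h T X"
  shows "\<exists>(h' :: 'a \<Rightarrow> (('b \<times> 'b) \<times> ('b \<times> 'b)) set) Tp X'.
           is_representation imp sc h' Tp X' \<and> h' z = {} \<and> (finite X \<longrightarrow> finite X')"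
proof -
  note R = assms(4)[unfolded is_representation_def]
  define Z where "Z = h z"
  have TX: "T \<subseteq> X \<times> X" and tr: "trans T" and inj: "inj h" and sub: "\<And>a. h a \<subseteq> T"
    and himp: "\<And>a b. h (imp a b) = (T - h a) \<union> h b"
    and hsc: "\<And>a b. h (sc a b) = h a O h b" using R by auto
  have Zsub: "Z \<subseteq> h a" for a
  proof -
    have "imp z a = imp z z" using assms(2) unfolding ia_le_def by auto
    hence "(T - Z) \<union> h a = (T - Z) \<union> Z" using himp Z_def by metis
    thus ?thesis using sub[of z] Z_def by blast
  qed
  have T1: "T = h (imp z z)" using himp[of z z] sub[of z] by auto
  have ZT: "Z O T \<subseteq> Z" using hsc[of z "imp z z"] assms(3) T1 Z_def by auto
  have AZ: "h a O Z \<subseteq> Z" for a using hsc[of a z] assms(3) Z_def by auto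
  define P where "P w y \<longleftrightarrow> (y = w \<or> (y,w) \<in> T) \<and> (y,w) \<notin> Z" for w y
  define H where "H A = {((x,w),(y,w)) | x y w. (x,y) \<in> A \<and> P w x \<and> P w y}" for A
  define h' where "h' a = H (h a)" for a
  define Tp where "Tp = H T"
  have memH: "(p, q) \<in> H A \<longleftrightarrow> snd p = snd q \<and> (fst p, fst q) \<in> A \<and> P (snd p) (fst p) \<and> P (snd p) (fst q)" for p q A
    unfolding H_def by (cases p; cases q) auto
  have "is_representation imp sc h' Tp (X \<times> X)"
    unfolding is_representation_def
  proof (intro conjI allI)
    show "Tp \<subseteq> (X \<times> X) \<times> X \<times> X"
    proof
      fix pq assume a: "pq \<in> Tp"
      obtain x w y w' where pq: "pq = ((x,w),(y,w'))" by (cases pq) auto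
      have "w = w'" "(x,y) \<in> T" "P w x" using a memH[of "(x,w)" "(y,w')" T] Tp_def pq by auto
      thus "pq \<in> (X \<times> X) \<times> X \<times> X" using TX pq unfolding P_def by auto
    qed
    show "trans Tp" unfolding trans_def Tp_def using memH tr by (smt (verit) transE)
    show "inj h'"
    proof (rule injI)
      fix a b assume e: "h' a = h' b"
      have "h a \<subseteq> h b" if e: "H (h a) = H (h b)" for a b
      proof
        fix xy assume xy: "xy \<in> h a"
        obtain x y where xyd: "xy = (x,y)" by (cases xy)
        show "xy \<in> h b"
        proof (rule ccontr)
          assume n: "xy \<notin> h b"
          hence nz: "(x,y) \<notin> Z" using Zsub xyd by auto
          have "(y,y) \<notin> Z" using AZ[of a] xy xyd nz by auto
          hence "P y x" "P y y" using nz xy xyd sub unfolding P_def by auto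
          hence "((x,y),(y,y)) \<in> H (h a)" using memH xy xyd by auto
          hence "((x,y),(y,y)) \<in> H (h b)" using e by simp
          thus False using memH n xyd by auto
        qed
      qed
      hence "h a = h b" using e h'_def by blast
      thus "a = b" using inj by (simp add: inj_eq)
    qed
    fix a
    show "h' a \<subseteq> Tp" unfolding h'_def Tp_def using sub memH by (auto; blast)
    fix b
    show "h' (imp a b) = Tp - h' a \<union> h' b"
      unfolding h'_def Tp_def himp by (auto simp: memH)
    show "h' (sc a b) = h' a O h' b"
    proof (intro set_eqI iffI)
      fix pq assume a1: "pq \<in> h' (sc a b)"
      obtain x w u w' where pq: "pq = ((x,w),(u,w'))" by (cases pq) auto
      have ww: "w = w'" and xu: "(x,u) \<in> h a O h b" and Px: "P w x" and Pu: "P w u"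
        using a1 pq memH hsc h'_def by auto
      obtain y where xy: "(x,y) \<in> h a" and yu: "(y,u) \<in> h b" using xu by auto
      have "(y,w) \<in> T"
      proof (cases "u = w")
        case True thus ?thesis using yu sub by auto
      next
        case False thus ?thesis using Pu yu sub tr unfolding P_def by (meson subsetD transE)
      qed
      moreover have "(y,w) \<notin> Z"
      proof
        assume "(y,w) \<in> Z"
        hence "(x,w) \<in> Z" using AZ[of a] xy by auto
        thus False using Px P_def by auto
      qed
      ultimately have Py: "P w y" unfolding P_def by auto
      have "((x,w),(y,w)) \<in> h' a" "((y,w),(u,w)) \<in> h' b"
        using memH h'_def xy yu Px Py Pu by auto
      thus "pq \<in> h' a O h' b" using pq ww by auto
    next
      fix pq assume "pq \<in> h' a O h' b"
      then obtain p m q where pm: "(p,m) \<in> H (h a)" and mq: "(m,q) \<in> H (h b)" and pq: "pq = (p,q)"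
        using h'_def by auto
      show "pq \<in> h' (sc a b)" using pm mq pq unfolding h'_def hsc memH by (simp add: memH relcomp.simps) metis
    qed
  qed
  moreover have "h' z = {}"
  proof -
    have False if "((x,w),(y,w)) \<in> H Z" for x y w
    proof -
      have xy: "(x,y) \<in> Z" and Px: "P w x" and Py: "P w y" using that memH by auto
      have "(x,w) \<in> Z"
      proof (cases "y = w")
        case True thus ?thesis using xy by simp
      next
        case False hence "(y,w) \<in> T" using Py P_def by auto
        thus ?thesis using ZT xy by auto
      qed
      thus False using Px P_def by auto
    qed
    hence "H Z = {}" unfolding H_def by blast
    thus ?thesis using h'_def Z_def by simp
  qed
  ultimately show ?thesis by blast
qed

end
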